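(* Let $p$ be a prime. If $X\subset\mathbb{R}^{k_1}$ and $Y\subset\mathbb{R}^{k_2}$ are Euclidean sub-$p$-toral, then $X\times Y\subset\mathbb{R}^{k_1+k_2}$ is Euclidean sub-$p$-toral.
   Context: A $p$-torus is a group isomorphic to $(\mathbb{Z}_p)^\alpha$ for some $\alpha\ge1$. A set $X\subset\mathbb{R}^k$ is Euclidean sub-$p$-toral if there exist $n\ge k$, a $p$-torus $G$ and an action of $G$ on $\mathbb{R}^n$ by isometries such that $X$ (viewed in $\mathbb{R}^n$ via the standard inclusion $\mathbb{R}^k\subset\mathbb{R}^n$) is contained in a single $G$-orbit. *)

theory Defs
  imports Complex_Main "HOL-Algebra.Group_Action" "HOL-Algebra.Product_Groups"
    "HOL-Algebra.Elementary_Groups" "HOL-Computational_Algebra.Primes"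
begin

text \<open>Euclidean space R^n, realised as real sequences vanishing from index n on.
  With this encoding the standard inclusion R^k \<subseteq> R^n (k \<le> n, padding by zeros)
  is literally set inclusion.\<close>
definition euclid :: "nat \<Rightarrow> (nat \<Rightarrow> real) set" where
  "euclid n = {x. \<forall>i\<ge>n. x i = 0}"

definition edist :: "nat \<Rightarrow> (nat \<Rightarrow> real) \<Rightarrow> (nat \<Rightarrow> real) \<Rightarrow> real" where
  "edist n x y = sqrt (\<Sum>i<n. (x i - y i)^2)"

definition p_torus :: "nat \<Rightarrow> ('g, 'b) monoid_scheme \<Rightarrow> bool" where
  "p_torus p G \<longleftrightarrow> group G \<and>
     (\<exists>\<alpha>\<ge>1. G \<cong> (product_group {..<\<alpha>} (\<lambda>_. integer_mod_group p) :: (nat \<Rightarrow> int) monoid))"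

definition isometric_action ::
  "('g, 'b) monoid_scheme \<Rightarrow> nat \<Rightarrow> ('g \<Rightarrow> (nat \<Rightarrow> real) \<Rightarrow> (nat \<Rightarrow> real)) \<Rightarrow> bool" where
  "isometric_action G n \<phi> \<longleftrightarrow> group_action G (euclid n) \<phi> \<and>
     (\<forall>g\<in>carrier G. \<forall>x\<in>euclid n. \<forall>y\<in>euclid n. edist n (\<phi> g x) (\<phi> g y) = edist n x y)"

text \<open>The group is taken with carrier type
  nat \<Rightarrow> int, which loses nothing: every p-torus is isomorphic to one of this type
  (e.g. the product group itself) and actions transport along isomorphisms.\<close>
definition euclidean_sub_p_toral :: "nat \<Rightarrow> nat \<Rightarrow> (nat \<Rightarrow> real) set \<Rightarrow> bool" where
  "euclidean_sub_p_toral p k X \<longleftrightarrow>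
     (\<exists>n\<ge>k. \<exists>G :: (nat \<Rightarrow> int) monoid. \<exists>\<phi>. p_torus p G \<and> isometric_action G n \<phi> \<and>
        (\<exists>x\<in>euclid n. X \<subseteq> orbit G \<phi> x))"

definition euclid_prod :: "nat \<Rightarrow> (nat \<Rightarrow> real) set \<Rightarrow> (nat \<Rightarrow> real) set \<Rightarrow> (nat \<Rightarrow> real) set" where
  "euclid_prod k1 X Y = {(\<lambda>i. if i < k1 then x i else y (i - k1)) | x y. x \<in> X \<and> y \<in> Y}"

end

theory Submission
  imports Defs
begin

lemma combine_action:
  fixes H :: "('h,'m) monoid_scheme" and G1 :: "('g1,'m1) monoid_scheme" and G2 :: "('g2,'m2) monoid_scheme"
  assumes H: "group H"
    and h1: "\<psi>1 \<in> hom H G1" and h2: "\<psi>2 \<in> hom H G2"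
    and a1: "group_action G1 E1 \<phi>1" and a2: "group_action G2 E2 \<phi>2"
    and Ein: "\<And>a b. a \<in> E1 \<Longrightarrow> b \<in> E2 \<Longrightarrow> Emb a b \<in> E0"
    and P1in: "\<And>z. z \<in> E0 \<Longrightarrow> P1 z \<in> E1"
    and P2in: "\<And>z. z \<in> E0 \<Longrightarrow> P2 z \<in> E2"
    and P1E: "\<And>a b. a \<in> E1 \<Longrightarrow> b \<in> E2 \<Longrightarrow> P1 (Emb a b) = a"
    and P2E: "\<And>a b. a \<in> E1 \<Longrightarrow> b \<in> E2 \<Longrightarrow> P2 (Emb a b) = b"
    and EP: "\<And>z. z \<in> E0 \<Longrightarrow> Emb (P1 z) (P2 z) = z"
  shows "group_action H E0 (\<lambda>g. \<lambda>z\<in>E0. Emb (\<phi>1 (\<psi>1 g) (P1 z)) (\<phi>2 (\<psi>2 g) (P2 z)))"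
proof -
  define \<Phi> where "\<Phi> = (\<lambda>g. \<lambda>z\<in>E0. Emb (\<phi>1 (\<psi>1 g) (P1 z)) (\<phi>2 (\<psi>2 g) (P2 z)))"
  interpret A1: group_action G1 E1 \<phi>1 by (rule a1)
  interpret A2: group_action G2 E2 \<phi>2 by (rule a2)
  interpret H: group H by (rule H)
  have G1: "group G1" and G2: "group G2"
    using A1.group_hom A2.group_hom group_hom.axioms(1) by blast+
  have c1: "\<psi>1 g \<in> carrier G1" if "g \<in> carrier H" for g using h1 that by (simp add: hom_in_carrier)
  have c2: "\<psi>2 g \<in> carrier G2" if "g \<in> carrier H" for g using h2 that by (simp add: hom_in_carrier)
  have in1: "\<phi>1 (\<psi>1 g) w \<in> E1" if "g \<in> carrier H" "w \<in> E1" for g w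
    using A1.element_image c1 that by blast
  have in2: "\<phi>2 (\<psi>2 g) w \<in> E2" if "g \<in> carrier H" "w \<in> E2" for g w
    using A2.element_image c2 that by blast
  have inE: "\<Phi> g z \<in> E0" if "g \<in> carrier H" "z \<in> E0" for g z
    using that by (simp add: \<Phi>_def Ein in1 in2 P1in P2in)
  have mult: "\<Phi> (a \<otimes>\<^bsub>H\<^esub> b) z = \<Phi> a (\<Phi> b z)" if "a \<in> carrier H" "b \<in> carrier H" "z \<in> E0" for a b z
  proof -
    have "\<psi>1 (a \<otimes>\<^bsub>H\<^esub> b) = \<psi>1 a \<otimes>\<^bsub>G1\<^esub> \<psi>1 b" using h1 that by (simp add: hom_mult)
    moreover have "\<psi>2 (a \<otimes>\<^bsub>H\<^esub> b) = \<psi>2 a \<otimes>\<^bsub>G2\<^esub> \<psi>2 b" using h2 that by (simp add: hom_mult)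
    ultimately show ?thesis using that
      by (simp add: \<Phi>_def inE Ein in1 in2 P1in P2in P1E P2E A1.composition_rule A2.composition_rule c1 c2 H.m_closed)
  qed
  have one: "\<Phi> \<one>\<^bsub>H\<^esub> z = z" if "z \<in> E0" for z
  proof -
    have "\<psi>1 \<one>\<^bsub>H\<^esub> = \<one>\<^bsub>G1\<^esub>" using h1 G1 H by (simp add: hom_one)
    moreover have "\<psi>2 \<one>\<^bsub>H\<^esub> = \<one>\<^bsub>G2\<^esub>" using h2 G2 H by (simp add: hom_one)
    moreover have "\<phi>1 \<one>\<^bsub>G1\<^esub> w = w" if "w \<in> E1" for w using A1.id_eq_one that
      by (metis restrict_apply')
    moreover have "\<phi>2 \<one>\<^bsub>G2\<^esub> w = w" if "w \<in> E2" for w using A2.id_eq_one that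
      by (metis restrict_apply')
    ultimately show ?thesis using that by (simp add: \<Phi>_def P1in P2in EP)
  qed
  have bij: "\<Phi> g \<in> Bij E0" if g: "g \<in> carrier H" for g
  proof -
    have "bij_betw (\<Phi> g) E0 E0"
    proof (rule bij_betw_byWitness[where f'="\<Phi> (inv\<^bsub>H\<^esub> g)"])
      show "\<forall>a\<in>E0. \<Phi> (inv\<^bsub>H\<^esub> g) (\<Phi> g a) = a"
        using g by (metis mult H.inv_closed H.l_inv one)
      show "\<forall>a'\<in>E0. \<Phi> g (\<Phi> (inv\<^bsub>H\<^esub> g) a') = a'"
        using g by (metis mult H.inv_closed H.r_inv one)
      show "\<Phi> g ` E0 \<subseteq> E0" using inE g by blast
      show "\<Phi> (inv\<^bsub>H\<^esub> g) ` E0 \<subseteq> E0" using inE g H.inv_closed by blast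
    qed
    moreover have "\<Phi> g \<in> extensional E0" by (simp add: \<Phi>_def)
    ultimately show ?thesis by (simp add: Bij_def)
  qed
  have "\<Phi> \<in> hom H (BijGroup E0)"
  proof (rule homI)
    show "\<Phi> g \<in> carrier (BijGroup E0)" if "g \<in> carrier H" for g
      using bij that by (simp add: BijGroup_def)
    show "\<Phi> (a \<otimes>\<^bsub>H\<^esub> b) = \<Phi> a \<otimes>\<^bsub>BijGroup E0\<^esub> \<Phi> b" if "a \<in> carrier H" "b \<in> carrier H" for a b
    proof -
      have "\<Phi> (a \<otimes>\<^bsub>H\<^esub> b) = compose E0 (\<Phi> a) (\<Phi> b)"
        using that mult by (auto simp: compose_def \<Phi>_def intro!: ext)
      then show ?thesis using that bij by (simp add: BijGroup_def)
    qed
  qed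
  then have "group_hom H (BijGroup E0) \<Phi>"
    by (simp add: group_hom_def group_hom_axioms_def H group_BijGroup)
  then show ?thesis unfolding \<Phi>_def[symmetric] by (simp add: group_action_def)
qed

definition Emb :: "nat \<Rightarrow> nat \<Rightarrow> nat \<Rightarrow> (nat \<Rightarrow> 'a) \<Rightarrow> (nat \<Rightarrow> 'a) \<Rightarrow> nat \<Rightarrow> 'a" where
  "Emb k1 k2 n1 a b = (\<lambda>i. if i < k1 then a i else if i < k1 + k2 then b (i - k1)
      else if i < n1 + k2 then a (i - k2) else b (i - n1))"

lemma sum_Emb:
  fixes A B :: "nat \<Rightarrow> real"
  assumes "k1 \<le> n1" "k2 \<le> n2"
  shows "sum (Emb k1 k2 n1 A B) {..<n1+n2} = sum A {..<n1} + sum B {..<n2}"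
proof -
  let ?E = "Emb k1 k2 n1 A B"
  have s1: "sum ?E {..<n1+n2} = sum ?E {0..<k1} + sum ?E {k1..<k1+k2} + sum ?E {k1+k2..<n1+k2} + sum ?E {n1+k2..<n1+n2}"
    using assms by (simp add: lessThan_atLeast0 sum.atLeastLessThan_concat)
  have e1: "sum ?E {0..<k1} = sum A {0..<k1}" by (rule sum.cong) (auto simp: Emb_def)
  have e2: "sum ?E {k1..<k1+k2} = sum B {0..<k2}"
  proof -
    have "sum ?E {k1..<k1+k2} = sum ?E {0+k1..<k2+k1}" by (simp add: add.commute)
    also have "\<dots> = sum (\<lambda>i. ?E (i+k1)) {0..<k2}" by (rule sum.shift_bounds_nat_ivl)
    also have "\<dots> = sum B {0..<k2}" by (rule sum.cong) (auto simp: Emb_def)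
    finally show ?thesis .
  qed
  have e3: "sum ?E {k1+k2..<n1+k2} = sum A {k1..<n1}"
  proof -
    have "sum ?E {k1+k2..<n1+k2} = sum (\<lambda>i. ?E (i+k2)) {k1..<n1}" by (rule sum.shift_bounds_nat_ivl)
    also have "\<dots> = sum A {k1..<n1}" by (rule sum.cong) (auto simp: Emb_def)
    finally show ?thesis .
  qed
  have e4: "sum ?E {n1+k2..<n1+n2} = sum B {k2..<n2}"
  proof -
    have "sum ?E {n1+k2..<n1+n2} = sum ?E {k2+n1..<n2+n1}" by (simp add: add.commute)
    also have "\<dots> = sum (\<lambda>i. ?E (i+n1)) {k2..<n2}" by (rule sum.shift_bounds_nat_ivl)
    also have "\<dots> = sum B {k2..<n2}" using assms by (intro sum.cong) (auto simp: Emb_def)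
    finally show ?thesis .
  qed
  have "sum A {..<n1} = sum A {0..<k1} + sum A {k1..<n1}"
    using assms by (simp add: lessThan_atLeast0 sum.atLeastLessThan_concat)
  moreover have "sum B {..<n2} = sum B {0..<k2} + sum B {k2..<n2}"
    using assms by (simp add: lessThan_atLeast0 sum.atLeastLessThan_concat)
  ultimately show ?thesis using s1 e1 e2 e3 e4 by simp
qed

abbreviation PG :: "nat \<Rightarrow> nat \<Rightarrow> (nat \<Rightarrow> int) monoid" where
  "PG p a \<equiv> product_group {..<a} (\<lambda>_. integer_mod_group p)"

lemma group_PG: "group (PG p a)" by simp

lemma pi1_hom: "(\<lambda>g. restrict g {..<a1}) \<in> hom (PG p (a1+a2)) (PG p a1)"
  by (rule homI) (auto simp: PiE_iff intro!: ext)

lemma pi2_hom: "(\<lambda>g. \<lambda>i\<in>{..<a2}. g (i+a1)) \<in> hom (PG p (a1+a2)) (PG p a2)"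
  by (rule homI) (auto simp: PiE_iff intro!: ext)

lemma pi_surj:
  assumes "c \<in> carrier (PG p a1)" "d \<in> carrier (PG p a2)"
  shows "\<exists>g\<in>carrier (PG p (a1+a2)). restrict g {..<a1} = c \<and> (\<lambda>i\<in>{..<a2}. g (i+a1)) = d"
proof (intro bexI conjI)
  let ?g = "\<lambda>i. if i < a1 then c i else if i < a1 + a2 then d (i - a1) else undefined"
  show "restrict ?g {..<a1} = c" using assms by (auto simp: PiE_iff extensional_def intro!: ext)
  show "(\<lambda>i\<in>{..<a2}. ?g (i+a1)) = d" using assms by (auto simp: PiE_iff extensional_def intro!: ext)
  show "?g \<in> carrier (PG p (a1+a2))" using assms by (auto simp: PiE_iff extensional_def)
qed

definition Pr1 :: "nat \<Rightarrow> nat \<Rightarrow> nat \<Rightarrow> (nat \<Rightarrow> real) \<Rightarrow> nat \<Rightarrow> real" where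
  "Pr1 k1 k2 n1 z = (\<lambda>j. if j < k1 then z j else if j < n1 then z (j + k2) else 0)"

definition Pr2 :: "nat \<Rightarrow> nat \<Rightarrow> nat \<Rightarrow> nat \<Rightarrow> (nat \<Rightarrow> real) \<Rightarrow> nat \<Rightarrow> real" where
  "Pr2 k1 k2 n1 n2 z = (\<lambda>j. if j < k2 then z (j + k1) else if j < n2 then z (j + n1) else 0)"

context
  fixes k1 k2 n1 n2 :: nat
  assumes le1: "k1 \<le> n1" and le2: "k2 \<le> n2"
begin

lemma Emb_in: "a \<in> euclid n1 \<Longrightarrow> b \<in> euclid n2 \<Longrightarrow> Emb k1 k2 n1 a b \<in> euclid (n1+n2)"
  using le1 le2 by (auto simp: euclid_def Emb_def)

lemma Pr1_in: "Pr1 k1 k2 n1 z \<in> euclid n1"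
  using le1 by (auto simp: euclid_def Pr1_def)

lemma Pr2_in: "Pr2 k1 k2 n1 n2 z \<in> euclid n2"
  using le2 by (auto simp: euclid_def Pr2_def)

lemma Pr1_Emb: "a \<in> euclid n1 \<Longrightarrow> b \<in> euclid n2 \<Longrightarrow> Pr1 k1 k2 n1 (Emb k1 k2 n1 a b) = a"
  using le1 le2 by (auto simp: euclid_def Emb_def Pr1_def intro!: ext)

lemma Pr2_Emb: "a \<in> euclid n1 \<Longrightarrow> b \<in> euclid n2 \<Longrightarrow> Pr2 k1 k2 n1 n2 (Emb k1 k2 n1 a b) = b"
  using le1 le2 by (auto simp: euclid_def Emb_def Pr2_def intro!: ext)

lemma Emb_Pr: "z \<in> euclid (n1+n2) \<Longrightarrow> Emb k1 k2 n1 (Pr1 k1 k2 n1 z) (Pr2 k1 k2 n1 n2 z) = z"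
  using le1 le2 by (auto simp: euclid_def Emb_def Pr1_def Pr2_def intro!: ext)

lemma edist_Emb:
  "edist (n1+n2) (Emb k1 k2 n1 a b) (Emb k1 k2 n1 a' b') = sqrt ((edist n1 a a')^2 + (edist n2 b b')^2)"
proof -
  have eq: "(\<lambda>i. (Emb k1 k2 n1 a b i - Emb k1 k2 n1 a' b' i)^2) =
        Emb k1 k2 n1 (\<lambda>j. (a j - a' j)^2) (\<lambda>j. (b j - b' j)^2)"
    by (auto simp: Emb_def intro!: ext)
  have "(\<Sum>i<n1+n2. (Emb k1 k2 n1 a b i - Emb k1 k2 n1 a' b' i)^2) =
     sum (Emb k1 k2 n1 (\<lambda>j. (a j - a' j)^2) (\<lambda>j. (b j - b' j)^2)) {..<n1+n2}"
    using eq by (rule arg_cong[where f="\<lambda>f. sum f {..<n1+n2}"])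
  also have "\<dots> = (\<Sum>j<n1. (a j - a' j)^2) + (\<Sum>j<n2. (b j - b' j)^2)"
    by (rule sum_Emb[OF le1 le2])
  finally have "(\<Sum>i<n1+n2. (Emb k1 k2 n1 a b i - Emb k1 k2 n1 a' b' i)^2) =
     (\<Sum>j<n1. (a j - a' j)^2) + (\<Sum>j<n2. (b j - b' j)^2)" .
  then show ?thesis
    by (simp add: edist_def sum_nonneg)
qed

end

lemma Emb_prod:
  assumes "x \<in> euclid k1" "y \<in> euclid k2"
  shows "Emb k1 k2 n1 x y = (\<lambda>i. if i < k1 then x i else y (i - k1))"
  using assms by (auto simp: euclid_def Emb_def intro!: ext)

theorem lemma2:
  fixes p k1 k2 :: nat and X Y :: "(nat \<Rightarrow> real) set"
  assumes "prime p"
    and "X \<subseteq> euclid k1" and "Y \<subseteq> euclid k2"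
    and "euclidean_sub_p_toral p k1 X" and "euclidean_sub_p_toral p k2 Y"
  shows "euclidean_sub_p_toral p (k1 + k2) (euclid_prod k1 X Y)"
proof -
  obtain n1 and G1 :: "(nat \<Rightarrow> int) monoid" and \<phi>1 x1 where
    n1: "n1 \<ge> k1" and pt1: "p_torus p G1" and ia1: "isometric_action G1 n1 \<phi>1"
    and x1: "x1 \<in> euclid n1" and X: "X \<subseteq> orbit G1 \<phi>1 x1"
    using assms(4) unfolding euclidean_sub_p_toral_def by blast
  obtain n2 and G2 :: "(nat \<Rightarrow> int) monoid" and \<phi>2 x2 where
    n2: "n2 \<ge> k2" and pt2: "p_torus p G2" and ia2: "isometric_action G2 n2 \<phi>2"
    and x2: "x2 \<in> euclid n2" and Y: "Y \<subseteq> orbit G2 \<phi>2 x2"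
    using assms(5) unfolding euclidean_sub_p_toral_def by blast
  obtain a1 where a1: "a1 \<ge> 1" "G1 \<cong> PG p a1" and gG1: "group G1"
    using pt1 unfolding p_torus_def by blast
  obtain a2 where a2: "a2 \<ge> 1" "G2 \<cong> PG p a2" and gG2: "group G2"
    using pt2 unfolding p_torus_def by blast
  obtain e1 where e1: "e1 \<in> iso G1 (PG p a1)"
    using a1(2) unfolding is_iso_def by blast
  obtain e2 where e2: "e2 \<in> iso G2 (PG p a2)"
    using a2(2) unfolding is_iso_def by blast
  define f1 where "f1 = inv_into (carrier G1) e1"
  define f2 where "f2 = inv_into (carrier G2) e2"
  have f1: "f1 \<in> iso (PG p a1) G1" unfolding f1_def by (rule group.iso_set_sym[OF gG1 e1])
  have f2: "f2 \<in> iso (PG p a2) G2" unfolding f2_def by (rule group.iso_set_sym[OF gG2 e2])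
  define \<psi>1 where "\<psi>1 = f1 \<circ> (\<lambda>g. restrict g {..<a1})"
  define \<psi>2 where "\<psi>2 = f2 \<circ> (\<lambda>g. \<lambda>i\<in>{..<a2}. g (i+a1))"
  have h1: "\<psi>1 \<in> hom (PG p (a1+a2)) G1"
    unfolding \<psi>1_def by (rule hom_compose[OF pi1_hom]) (use f1 in \<open>simp add: iso_def\<close>)
  have h2: "\<psi>2 \<in> hom (PG p (a1+a2)) G2"
    unfolding \<psi>2_def by (rule hom_compose[OF pi2_hom]) (use f2 in \<open>simp add: iso_def\<close>)
  define n where "n = n1 + n2"
  define E where "E = (Emb k1 k2 n1 :: (nat \<Rightarrow> real) \<Rightarrow> _)"
  define P1 where "P1 = Pr1 k1 k2 n1"
  define P2 where "P2 = Pr2 k1 k2 n1 n2"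
  define \<Phi> where "\<Phi> = (\<lambda>g. \<lambda>z\<in>euclid n. E (\<phi>1 (\<psi>1 g) (P1 z)) (\<phi>2 (\<psi>2 g) (P2 z)))"
  have ga1: "group_action G1 (euclid n1) \<phi>1" using ia1 by (simp add: isometric_action_def)
  have ga2: "group_action G2 (euclid n2) \<phi>2" using ia2 by (simp add: isometric_action_def)
  have GA: "group_action (PG p (a1+a2)) (euclid n) \<Phi>"
    unfolding \<Phi>_def
    by (rule combine_action[OF group_PG h1 h2 ga1 ga2])
       (auto simp: n_def E_def P1_def P2_def Emb_in[OF n1 n2] Pr1_in[OF n1 n2] Pr2_in[OF n1 n2] Pr1_Emb[OF n1 n2] Pr2_Emb[OF n1 n2] Emb_Pr[OF n1 n2])
  have c1: "\<psi>1 g \<in> carrier G1" if "g \<in> carrier (PG p (a1+a2))" for g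
    using h1 that by (rule hom_in_carrier)
  have c2: "\<psi>2 g \<in> carrier G2" if "g \<in> carrier (PG p (a1+a2))" for g
    using h2 that by (rule hom_in_carrier)
  have in1: "\<phi>1 h w \<in> euclid n1" if "h \<in> carrier G1" "w \<in> euclid n1" for h w
    using group_action.element_image[OF ga1] that by blast
  have in2: "\<phi>2 h w \<in> euclid n2" if "h \<in> carrier G2" "w \<in> euclid n2" for h w
    using group_action.element_image[OF ga2] that by blast
  have iso1: "edist n1 (\<phi>1 h x) (\<phi>1 h y) = edist n1 x y" if "h \<in> carrier G1" "x \<in> euclid n1" "y \<in> euclid n1" for h x y
    using ia1 that by (simp add: isometric_action_def)
  have iso2: "edist n2 (\<phi>2 h x) (\<phi>2 h y) = edist n2 x y" if "h \<in> carrier G2" "x \<in> euclid n2" "y \<in> euclid n2" for h x y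
    using ia2 that by (simp add: isometric_action_def)
  have IA: "isometric_action (PG p (a1+a2)) n \<Phi>"
    unfolding isometric_action_def
  proof (intro conjI GA ballI)
    fix g x y assume g: "g \<in> carrier (PG p (a1+a2))" and x: "x \<in> euclid n" and y: "y \<in> euclid n"
    have "edist n (\<Phi> g x) (\<Phi> g y) =
       sqrt ((edist n1 (P1 x) (P1 y))^2 + (edist n2 (P2 x) (P2 y))^2)"
      using x y g n1 n2 by (simp add: \<Phi>_def n_def E_def P1_def P2_def edist_Emb[OF n1 n2] iso1 iso2 c1 c2 Pr1_in[OF n1 n2] Pr2_in[OF n1 n2] in1 in2)
    also have "\<dots> = edist n (E (P1 x) (P2 x)) (E (P1 y) (P2 y))"
      using n1 n2 by (simp add: n_def E_def edist_Emb[OF n1 n2])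
    also have "\<dots> = edist n x y"
      using x y n1 n2 by (simp add: n_def E_def P1_def P2_def Emb_Pr[OF n1 n2])
    finally show "edist n (\<Phi> g x) (\<Phi> g y) = edist n x y" .
  qed
  have pt: "p_torus p (PG p (a1+a2))"
    proof -
    have "a1 + a2 \<ge> 1" using a1 by simp
    moreover have "PG p (a1+a2) \<cong> PG p (a1+a2)" by (rule iso_refl)
    ultimately show ?thesis unfolding p_torus_def using group_PG by blast
  qed
  have z0: "E x1 x2 \<in> euclid n" using x1 x2 n1 n2 by (simp add: E_def n_def Emb_in[OF n1 n2])
  have orb: "euclid_prod k1 X Y \<subseteq> orbit (PG p (a1+a2)) \<Phi> (E x1 x2)"
  proof
    fix w assume "w \<in> euclid_prod k1 X Y"
    then obtain x y where w: "w = (\<lambda>i. if i < k1 then x i else y (i - k1))" and x: "x \<in> X" and y: "y \<in> Y"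
      unfolding euclid_prod_def by (auto simp only: mem_Collect_eq)
    have "x \<in> orbit G1 \<phi>1 x1" using X x by (rule subsetD)
    then obtain b1 where b1: "b1 \<in> carrier G1" "x = \<phi>1 b1 x1" unfolding orbit_def by (auto simp only: mem_Collect_eq)
    have "y \<in> orbit G2 \<phi>2 x2" using Y y by (rule subsetD)
    then obtain b2 where b2: "b2 \<in> carrier G2" "y = \<phi>2 b2 x2" unfolding orbit_def by (auto simp only: mem_Collect_eq)
    have "b1 \<in> f1 ` carrier (PG p a1)" using f1 b1(1) unfolding iso_def bij_betw_def by (simp only: mem_Collect_eq)
    then obtain c where c: "c \<in> carrier (PG p a1)" "f1 c = b1" by (auto simp only: image_iff)
    have "b2 \<in> f2 ` carrier (PG p a2)" using f2 b2(1) unfolding iso_def bij_betw_def by (simp only: mem_Collect_eq)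
    then obtain d where d: "d \<in> carrier (PG p a2)" "f2 d = b2" by (auto simp only: image_iff)
    obtain g where g: "g \<in> carrier (PG p (a1+a2))" "restrict g {..<a1} = c" "(\<lambda>i\<in>{..<a2}. g (i+a1)) = d"
      using pi_surj[OF c(1) d(1)] by (auto simp only:)
    have "\<psi>1 g = b1" "\<psi>2 g = b2" using g(2,3) c(2) d(2) by (simp_all add: \<psi>1_def \<psi>2_def)
    then have "\<Phi> g (E x1 x2) = E x y"
      using z0 x1 x2 n1 n2 b1 b2 by (simp add: \<Phi>_def E_def P1_def P2_def Pr1_Emb[OF n1 n2] Pr2_Emb[OF n1 n2] in1 in2)
    also have "\<dots> = w" proof -
      have "x \<in> euclid k1" "y \<in> euclid k2" using x y assms(2,3) by blast+
      then show ?thesis using w by (simp add: E_def Emb_prod)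
    qed
    finally show "w \<in> orbit (PG p (a1+a2)) \<Phi> (E x1 x2)"
      unfolding orbit_def using g(1) by blast
  qed
  show ?thesis
    unfolding euclidean_sub_p_toral_def
  proof (rule exI[of _ n], intro conjI)
    show "k1 + k2 \<le> n" using n1 n2 by (simp add: n_def)
    show "\<exists>G :: (nat \<Rightarrow> int) monoid. \<exists>\<phi>. p_torus p G \<and> isometric_action G n \<phi> \<and>
        (\<exists>x\<in>euclid n. euclid_prod k1 X Y \<subseteq> orbit G \<phi> x)"
      using pt IA z0 orb by blast
  qed
qed

end
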